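(* Let $n\ge 2$ and $1\le s\le n-1$ be integers, and let ${\bf A}=(a(i,j))_{1\le i,j\le n}$ be a real $n\times n$ matrix such that $a(i,j)\ne 0$ for every pair $(i,j)$ satisfying either $i\le j\le \min(i+n-s,n)$ or $j+s\le i$. Then the $2n\times 2n$ matrix ${\bf A}_{\rm sde}$ associated with ${\bf A}$ (defined below) has $1$ as a simple eigenvalue, and all of its other eigenvalues lie in the open unit disk $\{z\in\mathbb{C}: |z|<1\}$.
   Context: For a real number $t$, $t_+=\max(t,0)$. For a real $n\times n$ matrix ${\bf A}=(a(i,j))$ with no zero row, define the decoding weights $w_i=\big(\sum_{j=1}^n |a(i,j)|\big)^{-1}$, $1\le i\le n$, the normalized entries $\tilde a(i,j)=w_i\,a(i,j)$, the $n\times n$ matrices $\tilde{\bf A}_+=\big((\tilde a(i,j))_+\big)_{i,j}$ and $\tilde{\bf A}_-=\big((-\tilde a(i,j))_+\big)_{i,j}$, and the $2n\times 2n$ (row stochastic) block matrix $${\bf A}_{\rm sde}=\begin{pmatrix}\tilde{\bf A}_+ & \tilde{\bf A}_-\\ \tilde{\bf A}_+ & \tilde{\bf A}_-\end{pmatrix}.$$ *)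

theory Defs
  imports "Jordan_Normal_Form.Char_Poly"
begin

text \<open>Matrices are Jordan_Normal_Form matrices, indexed from 0.
  Decoding weights, normalized entries, positive/negative parts, and the
  2n x 2n block matrix A_sde.\<close>

definition dec_weight :: "real mat \<Rightarrow> nat \<Rightarrow> real" where
  "dec_weight A i = inverse (\<Sum>j<dim_col A. \<bar>A $$ (i, j)\<bar>)"

definition normalized_mat :: "real mat \<Rightarrow> real mat" where
  "normalized_mat A = mat (dim_row A) (dim_col A) (\<lambda>(i, j). dec_weight A i * A $$ (i, j))"

definition pos_part_mat :: "real mat \<Rightarrow> real mat" where
  "pos_part_mat A = mat (dim_row A) (dim_col A)
     (\<lambda>(i, j). max (normalized_mat A $$ (i, j)) 0)"

definition neg_part_mat :: "real mat \<Rightarrow> real mat" where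
  "neg_part_mat A = mat (dim_row A) (dim_col A)
     (\<lambda>(i, j). max (- normalized_mat A $$ (i, j)) 0)"

definition A_sde :: "real mat \<Rightarrow> real mat" where
  "A_sde A = four_block_mat (pos_part_mat A) (neg_part_mat A) (pos_part_mat A) (neg_part_mat A)"

end

theory Submission imports Defs "Jordan_Normal_Form.Jordan_Normal_Form_Uniqueness" "Jordan_Normal_Form.Jordan_Normal_Form_Existence" begin

hide_const (open) Coset.order

definition stoch :: "(nat \<Rightarrow> nat \<Rightarrow> real) \<Rightarrow> nat \<Rightarrow> bool" where
  "stoch M n \<longleftrightarrow> (\<forall>i<n. \<forall>j<n. M i j \<ge> 0) \<and> (\<forall>i<n. (\<Sum>j<n. M i j) = 1)"

lemma obtain_max:
  fixes u :: "nat \<Rightarrow> real"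
  assumes "n > 0"
  obtains i0 where "i0 < n" "\<And>j. j < n \<Longrightarrow> u j \<le> u i0"
proof -
  let ?m = "Max (u ` {..<n})"
  have "?m \<in> u ` {..<n}" using assms by (intro Max_in) auto
  then obtain i0 where "i0 < n" "u i0 = ?m" by auto
  moreover have "\<And>j. j < n \<Longrightarrow> u j \<le> ?m" by (intro Max_ge) auto
  ultimately show ?thesis using that by metis
qed

lemma stoch_le_max:
  fixes u :: "nat \<Rightarrow> real"
  assumes "stoch M n" "i < n" "\<And>j. j < n \<Longrightarrow> u j \<le> m"
  shows "(\<Sum>j<n. M i j * u j) \<le> m"
proof -
  have "(\<Sum>j<n. M i j * u j) \<le> (\<Sum>j<n. M i j * m)"
    using assms by (intro sum_mono mult_left_mono) (auto simp: stoch_def)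
  also have "\<dots> = m" using assms by (simp add: stoch_def sum_distrib_right[symmetric])
  finally show ?thesis .
qed

lemma stoch_c_zero:
  fixes u :: "nat \<Rightarrow> real"
  assumes "stoch M n" "n > 0" "\<And>i. i < n \<Longrightarrow> (\<Sum>j<n. M i j * u j) = u i + c"
  shows "c = 0"
proof -
  obtain i0 where i0: "i0 < n" "\<And>j. j < n \<Longrightarrow> u j \<le> u i0" using obtain_max[OF assms(2), of u] by blast
  obtain i1 where i1: "i1 < n" "\<And>j. j < n \<Longrightarrow> - u j \<le> - u i1" using obtain_max[OF assms(2), of "\<lambda>j. - u j"] by blast
  have "u i0 + c \<le> u i0" using stoch_le_max[OF assms(1) i0(1), where u=u and m="u i0"] i0(2) assms(3)[OF i0(1)] by simp
  moreover have "(\<Sum>j<n. M i1 j * (- u j)) \<le> - u i1" using stoch_le_max[OF assms(1) i1(1), where u="\<lambda>j. - u j" and m="- u i1"] i1(2) by simp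
  hence "- (u i1 + c) \<le> - u i1" using assms(3)[OF i1(1)] by (simp add: sum_negf)
  ultimately show ?thesis by linarith
qed

lemma stoch_max_prop:
  fixes u :: "nat \<Rightarrow> real"
  assumes "stoch M n" "i < n" "\<And>j. j < n \<Longrightarrow> u j \<le> u i"
    and "(\<Sum>j<n. M i j * u j) = u i" and "k < n" "M i k > 0"
  shows "u k = u i"
proof -
  have "(\<Sum>j<n. M i j * (u i - u j)) = (\<Sum>j<n. M i j) * u i - (\<Sum>j<n. M i j * u j)"
    unfolding right_diff_distrib sum_subtractf sum_distrib_right by (rule refl)
  also have "\<dots> = 0" using assms by (simp add: stoch_def)
  finally have "(\<Sum>j<n. M i j * (u i - u j)) = 0" .
  moreover have "\<forall>j\<in>{..<n}. M i j * (u i - u j) \<ge> 0" using assms by (auto simp: stoch_def)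
  ultimately have "\<forall>j\<in>{..<n}. M i j * (u i - u j) = 0"
    using sum_nonneg_eq_0_iff[of "{..<n}" "\<lambda>j. M i j * (u i - u j)"] by simp
  hence "M i k * (u i - u k) = 0" using assms(5) by simp
  thus ?thesis using assms(6) by simp
qed

lemma stoch_const:
  fixes u :: "nat \<Rightarrow> real"
  assumes "stoch M n" "n > 0"
    and fwd: "\<And>i. Suc i < n \<Longrightarrow> M i (Suc i) > 0" and bk: "M (n - 1) 0 > 0"
    and eq: "\<And>i. i < n \<Longrightarrow> (\<Sum>j<n. M i j * u j) = u i"
  shows "\<And>i. i < n \<Longrightarrow> u i = u 0"
proof -
  obtain i0 where i0: "i0 < n" "\<And>j. j < n \<Longrightarrow> u j \<le> u i0" using obtain_max[OF assms(2), of u] by blast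
  have step: "u k = u i0" if "i < n" "u i = u i0" "k < n" "M i k > 0" for i k
  proof -
    have "\<And>j. j < n \<Longrightarrow> u j \<le> u i" using i0(2) that(2) by simp
    from stoch_max_prop[OF assms(1) that(1) this eq[OF that(1)] that(3,4)] show ?thesis using that(2) by simp
  qed
  have A: "i0 + k < n \<longrightarrow> u (i0 + k) = u i0" for k
  proof (induction k)
    case (Suc k)
    show ?case
    proof
      assume "i0 + Suc k < n"
      hence "u (i0 + k) = u i0" using Suc by simp
      thus "u (i0 + Suc k) = u i0" using step[of "i0 + k" "Suc (i0 + k)"] fwd[of "i0 + k"] \<open>i0 + Suc k < n\<close> by simp
    qed
  qed simp
  have "u (n - 1) = u i0" using A[of "n - 1 - i0"] i0 by auto
  hence u0: "u 0 = u i0" using step[of "n - 1" 0] bk assms(2) by auto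
  have B: "k < n \<longrightarrow> u k = u i0" for k
  proof (induction k)
    case (Suc k)
    show ?case
    proof
      assume "Suc k < n"
      hence "u k = u i0" using Suc by simp
      thus "u (Suc k) = u i0" using step[of "k" "Suc k"] fwd[of "k"] \<open>Suc k < n\<close> by simp
    qed
  qed (use u0 in simp)
  show "\<And>i. i < n \<Longrightarrow> u i = u 0" using B u0 by simp
qed

lemma disk_lemma:
  fixes z :: complex and d :: real
  assumes "0 < d" "d \<le> 1" "cmod (z - of_real d) \<le> 1 - d"
  shows "z = 1 \<or> cmod z < 1"
proof (rule ccontr)
  assume "\<not> ?thesis"
  hence ne: "z \<noteq> 1" and ge: "cmod z \<ge> 1" by auto
  let ?x = "Re z" and ?y = "Im z"
  have 1: "(?x - d)^2 + ?y^2 \<le> (1 - d)^2"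
  proof -
    have "cmod (z - of_real d) ^ 2 \<le> (1 - d)^2" using assms by (intro power_mono) auto
    thus ?thesis by (simp add: cmod_power2)
  qed
  have 2: "?x^2 + ?y^2 \<ge> 1" using ge by (metis cmod_power2 one_le_power)
  have "?x \<ge> 1"
  proof -
    have "(?x - d)^2 + ?y^2 = ?x^2 + ?y^2 - 2*d*?x + d^2" by (simp add: power2_eq_square algebra_simps)
    hence "2*d*?x \<ge> 2*d" using 1 2 by (simp add: power2_eq_square algebra_simps)
    thus ?thesis using assms(1) by simp
  qed
  hence "(1 - d)^2 \<le> (?x - d)^2" using assms by (intro power_mono) auto
  moreover have "0 \<le> ?y^2" by simp
  ultimately have y: "?y^2 = 0" and sq: "(?x - d)^2 = (1-d)^2" using 1 by linarith+
  have "?x - d = 1 - d" using sq \<open>?x \<ge> 1\<close> assms(2) by (smt (verit) power2_eq_iff)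
  hence "?x = 1" by simp
  moreover have "?y = 0" using y by simp
  ultimately have "z = 1" by (simp add: complex_eq_iff)
  with ne show False by simp
qed


lemma stoch_diag_le1: assumes "stoch M n" "i < n" shows "M i i \<le> 1"
proof -
  have "M i i \<le> (\<Sum>j<n. M i j)" using assms by (intro member_le_sum) (auto simp: stoch_def)
  thus ?thesis using assms by (simp add: stoch_def)
qed

lemma gersh:
  fixes w :: "nat \<Rightarrow> complex"
  assumes st: "stoch M n" and diag: "\<And>i. i < n \<Longrightarrow> M i i > 0"
    and ev: "\<And>i. i < n \<Longrightarrow> (\<Sum>j<n. of_real (M i j) * w j) = z * w i"
    and k: "k < n" "w k \<noteq> 0"
  shows "z = 1 \<or> cmod z < 1"
proof -
  have n: "n > 0" using k by simp
  obtain i0 where i0: "i0 < n" "\<And>j. j < n \<Longrightarrow> cmod (w j) \<le> cmod (w i0)"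
    using obtain_max[OF n, of "\<lambda>j. cmod (w j)"] by blast
  define m where "m = cmod (w i0)"
  define d where "d = M i0 i0"
  have mpos: "m > 0" using i0(2)[OF k(1)] k(2) unfolding m_def by (meson less_le_trans zero_less_norm_iff)
  have d: "0 < d" "d \<le> 1" using diag[OF i0(1)] stoch_diag_le1[OF st i0(1)] by (auto simp: d_def)
  let ?R = "{..<n} - {i0}"
  have split: "(\<Sum>j<n. of_real (M i0 j) * w j) = of_real d * w i0 + (\<Sum>j\<in>?R. of_real (M i0 j) * w j)"
    using i0(1) by (simp add: d_def sum.remove[of "{..<n}" i0])
  have "(z - of_real d) * w i0 = (\<Sum>j\<in>?R. of_real (M i0 j) * w j)"
    using split ev[OF i0(1)] by (simp add: algebra_simps)
  hence "cmod (z - of_real d) * m = cmod (\<Sum>j\<in>?R. of_real (M i0 j) * w j)"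
    unfolding m_def by (metis norm_mult)
  also have "\<dots> \<le> (\<Sum>j\<in>?R. cmod (of_real (M i0 j) * w j))" by (rule norm_sum)
  also have "\<dots> \<le> (\<Sum>j\<in>?R. M i0 j * m)"
  proof (rule sum_mono)
    fix j assume j: "j \<in> ?R"
    have "M i0 j \<ge> 0" using st i0(1) j by (auto simp: stoch_def)
    thus "cmod (of_real (M i0 j) * w j) \<le> M i0 j * m"
      using i0(2)[of j] j by (auto simp: norm_mult m_def intro: mult_left_mono)
  qed
  also have "\<dots> = (\<Sum>j\<in>?R. M i0 j) * m" by (simp add: sum_distrib_right)
  also have "(\<Sum>j\<in>?R. M i0 j) = 1 - d"
  proof -
    have "(\<Sum>j<n. M i0 j) = d + (\<Sum>j\<in>?R. M i0 j)"
      using i0(1) by (simp add: d_def sum.remove[of "{..<n}" i0])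
    thus ?thesis using st i0(1) by (simp add: stoch_def)
  qed
  finally have "cmod (z - of_real d) * m \<le> (1 - d) * m" .
  hence "cmod (z - of_real d) \<le> 1 - d" using mpos by simp
  thus ?thesis using disk_lemma d by blast
qed


definition Pf :: "real mat \<Rightarrow> nat \<Rightarrow> nat \<Rightarrow> real" where
  "Pf A i j = max (dec_weight A i * A $$ (i, j)) 0"
definition Nf :: "real mat \<Rightarrow> nat \<Rightarrow> nat \<Rightarrow> real" where
  "Nf A i j = max (- (dec_weight A i * A $$ (i, j))) 0"
definition Mf :: "real mat \<Rightarrow> nat \<Rightarrow> nat \<Rightarrow> real" where
  "Mf A i j = \<bar>dec_weight A i * A $$ (i, j)\<bar>"

lemma PN_M: "Pf A i j + Nf A i j = Mf A i j"
  unfolding Pf_def Nf_def Mf_def by linarith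

lemma A_sde_carrier: assumes "A \<in> carrier_mat n n" shows "A_sde A \<in> carrier_mat (2*n) (2*n)"
  using assms unfolding A_sde_def pos_part_mat_def neg_part_mat_def by auto

lemma A_sde_index: assumes "A \<in> carrier_mat n n" "i < 2*n" "j < 2*n"
  shows "A_sde A $$ (i, j) = (if j < n then Pf A (i mod n) j else Nf A (i mod n) (j - n))"
  using assms unfolding A_sde_def pos_part_mat_def neg_part_mat_def normalized_mat_def Pf_def Nf_def
  by (auto simp: index_mat_four_block less_diff_conv2 mod_if)

lemma C_mult: assumes A: "A \<in> carrier_mat n n" and v: "v \<in> carrier_vec (2*n)" and i: "i < 2*n"
  shows "(map_mat complex_of_real (A_sde A) *\<^sub>v v) $ i =
    (\<Sum>j<n. of_real (Pf A (i mod n) j) * v $ j) + (\<Sum>j<n. of_real (Nf A (i mod n) j) * v $ (j + n))"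
proof -
  have c: "A_sde A \<in> carrier_mat (2*n) (2*n)" by (rule A_sde_carrier[OF A])
  have "(map_mat complex_of_real (A_sde A) *\<^sub>v v) $ i = (\<Sum>j\<in>{0..<2*n}. of_real (A_sde A $$ (i, j)) * v $ j)"
    using c v i by (simp add: scalar_prod_def)
  also have "\<dots> = (\<Sum>j\<in>{0..<n}. of_real (A_sde A $$ (i, j)) * v $ j) + (\<Sum>j\<in>{n..<2*n}. of_real (A_sde A $$ (i, j)) * v $ j)"
    by (rule sum.atLeastLessThan_concat[symmetric]) auto
  also have "(\<Sum>j\<in>{0..<n}. of_real (A_sde A $$ (i, j)) * v $ j) = (\<Sum>j<n. of_real (Pf A (i mod n) j) * v $ j)"
    using A i by (auto simp: A_sde_index lessThan_atLeast0 intro!: sum.cong)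
  also have "(\<Sum>j\<in>{n..<2*n}. of_real (A_sde A $$ (i, j)) * v $ j) = (\<Sum>j\<in>{0+n..<n+n}. of_real (A_sde A $$ (i, j)) * v $ j)"
    by (simp add: mult_2)
  also have "\<dots> = (\<Sum>j\<in>{0..<n}. of_real (A_sde A $$ (i, j + n)) * v $ (j + n))"
    by (rule sum.shift_bounds_nat_ivl)
  also have "\<dots> = (\<Sum>j<n. of_real (Nf A (i mod n) j) * v $ (j + n))"
    using A i by (auto simp: A_sde_index lessThan_atLeast0 intro!: sum.cong)
  finally show ?thesis .
qed

lemma dec_weight_pos: assumes "A \<in> carrier_mat n n" "i < n" "A $$ (i, i) \<noteq> 0"
  shows "dec_weight A i > 0" and "(\<Sum>j<n. Mf A i j) = 1"
proof -
  have "\<bar>A $$ (i, i)\<bar> \<le> (\<Sum>j<n. \<bar>A $$ (i, j)\<bar>)" using assms by (intro member_le_sum) auto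
  hence S: "(\<Sum>j<n. \<bar>A $$ (i, j)\<bar>) > 0" using assms(3) by linarith
  thus "dec_weight A i > 0" using assms(1) by (simp add: dec_weight_def)
  have "(\<Sum>j<n. Mf A i j) = dec_weight A i * (\<Sum>j<n. \<bar>A $$ (i, j)\<bar>)"
    using \<open>dec_weight A i > 0\<close> by (simp add: Mf_def abs_mult sum_distrib_left)
  also have "\<dots> = 1" using S assms(1) by (simp add: dec_weight_def)
  finally show "(\<Sum>j<n. Mf A i j) = 1" .
qed

lemma stoch_Mf: assumes "A \<in> carrier_mat n n" "\<And>i. i < n \<Longrightarrow> A $$ (i, i) \<noteq> 0"
  shows "stoch (Mf A) n"
  using dec_weight_pos[OF assms(1) _ assms(2)] unfolding stoch_def by (auto simp: Mf_def)

lemma Mf_pos: assumes "A \<in> carrier_mat n n" "\<And>i. i < n \<Longrightarrow> A $$ (i, i) \<noteq> 0" "i < n" "A $$ (i, j) \<noteq> 0"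
  shows "Mf A i j > 0"
  using dec_weight_pos(1)[OF assms(1) assms(3) assms(2)[OF assms(3)]] assms(4) by (simp add: Mf_def)


lemma charmat_mult: assumes A: "(A :: 'a :: field mat) \<in> carrier_mat n n" and v: "v \<in> carrier_vec n"
  shows "char_matrix A e *\<^sub>v v = A *\<^sub>v v + (-e) \<cdot>\<^sub>v v"
  unfolding char_matrix_def
  by (rule eq_vecI, insert v A, auto simp: add_scalar_prod_distrib[of _ n])

lemma C_reduce:
  assumes A: "A \<in> carrier_mat n n" and v: "v \<in> carrier_vec (2*n)" and z: "z \<noteq> 0"
    and eq: "\<And>i. i < 2*n \<Longrightarrow> (map_mat complex_of_real (A_sde A) *\<^sub>v v) $ i = z * v $ i + c"
  shows "\<And>i. i < n \<Longrightarrow> v $ (i + n) = v $ i"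
    and "\<And>i. i < n \<Longrightarrow> (\<Sum>j<n. of_real (Mf A i j) * v $ j) = z * v $ i + c"
proof -
  let ?C = "map_mat complex_of_real (A_sde A)"
  have same: "(?C *\<^sub>v v) $ (i + n) = (?C *\<^sub>v v) $ i" if "i < n" for i
    using C_mult[OF A v, of i] C_mult[OF A v, of "i + n"] that by simp
  show vv: "v $ (i + n) = v $ i" if "i < n" for i
  proof -
    have "z * v $ (i + n) + c = z * v $ i + c" using same[OF that] eq[of i] eq[of "i + n"] that by simp
    thus ?thesis using z by simp
  qed
  show "(\<Sum>j<n. of_real (Mf A i j) * v $ j) = z * v $ i + c" if i: "i < n" for i
  proof -
    have "z * v $ i + c = (?C *\<^sub>v v) $ i" using eq[of i] i by simp
    also have "\<dots> = (\<Sum>j<n. of_real (Pf A i j) * v $ j) + (\<Sum>j<n. of_real (Nf A i j) * v $ j)"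
      using C_mult[OF A v, of i] i vv by simp
    also have "\<dots> = (\<Sum>j<n. of_real (Pf A i j) * v $ j + of_real (Nf A i j) * v $ j)"
      by (rule sum.distrib[symmetric])
    also have "\<dots> = (\<Sum>j<n. of_real (Mf A i j) * v $ j)"
      by (intro sum.cong) (auto simp: PN_M[symmetric] distrib_right)
    finally show ?thesis by simp
  qed
qed

lemma mat_vec_zero: "(M :: 'a :: comm_ring_1 mat) \<in> carrier_mat k m \<Longrightarrow> M *\<^sub>v 0\<^sub>v m = 0\<^sub>v k"
  by (intro eq_vecI) (auto simp: scalar_prod_def)

locale sde_setup =
  fixes A :: "real mat" and n :: nat
  assumes A: "A \<in> carrier_mat n n" and npos: "n > 0"
    and diag: "\<And>i. i < n \<Longrightarrow> A $$ (i, i) \<noteq> 0"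
    and fwd: "\<And>i. Suc i < n \<Longrightarrow> A $$ (i, Suc i) \<noteq> 0"
    and bk: "A $$ (n - 1, 0) \<noteq> 0"
begin

abbreviation "C \<equiv> map_mat complex_of_real (A_sde A)"

lemma C_carrier: "C \<in> carrier_mat (2*n) (2*n)" using A_sde_carrier[OF A] by simp

lemma st: "stoch (Mf A) n" by (rule stoch_Mf[OF A diag])

lemma eig_bound: assumes "eigenvalue C z" shows "z = 1 \<or> cmod z < 1"
proof (cases "z = 0")
  case True thus ?thesis by simp
next
  case z: False
  from assms obtain v where v: "v \<in> carrier_vec (2*n)" "v \<noteq> 0\<^sub>v (2*n)" "C *\<^sub>v v = z \<cdot>\<^sub>v v"
    unfolding eigenvalue_def eigenvector_def using C_carrier by auto
  have eq: "(C *\<^sub>v v) $ i = z * v $ i + 0" if "i < 2*n" for i using v(1,3) that by simp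
  note R = C_reduce[OF A v(1) z eq]
  obtain k where k: "k < 2*n" "v $ k \<noteq> 0" using v(1,2) by (metis carrier_vecD eq_vecI index_zero_vec(1,2))
  obtain k' where k': "k' < n" "v $ k' \<noteq> 0"
  proof (cases "k < n")
    case True thus ?thesis using that k by blast
  next
    case False
    hence "v $ (k - n) = v $ k" using R(1)[of "k - n"] k(1) by simp
    thus ?thesis using that[of "k - n"] k False by simp
  qed
  show ?thesis
    by (rule gersh[OF st, of "\<lambda>j. v $ j" z k']) (use Mf_pos[OF A diag] diag R(2) k' in auto)
qed


abbreviation "onev \<equiv> vec (2*n) (\<lambda>_. 1 :: complex)"
abbreviation "X \<equiv> char_matrix C 1"

lemma X_carrier: "X \<in> carrier_mat (2*n) (2*n)" using C_carrier by simp

lemma C_one: "C *\<^sub>v onev = onev"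
proof (rule eq_vecI)
  fix i assume "i < dim_vec onev"
  hence i: "i < 2*n" by simp
  have im: "i mod n < n" using npos by simp
  have "(C *\<^sub>v onev) $ i = (\<Sum>j<n. of_real (Pf A (i mod n) j)) + (\<Sum>j<n. of_real (Nf A (i mod n) j))"
    using C_mult[OF A _ i, of onev] by simp
  also have "\<dots> = of_real (\<Sum>j<n. Pf A (i mod n) j + Nf A (i mod n) j)"
    by (simp add: sum.distrib)
  also have "\<dots> = of_real (\<Sum>j<n. Mf A (i mod n) j)" by (simp add: PN_M)
  also have "\<dots> = 1" using dec_weight_pos(2)[OF A im diag[OF im]] by simp
  finally show "(C *\<^sub>v onev) $ i = onev $ i" using i by simp
qed (use C_carrier in simp)

lemma gen_ker:
  assumes v: "v \<in> carrier_vec (2*n)" and eq: "\<And>i. i < 2*n \<Longrightarrow> (C *\<^sub>v v) $ i = v $ i + c"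
  shows "c = 0" and "\<And>i. i < 2*n \<Longrightarrow> v $ i = v $ 0"
proof -
  have eq': "(C *\<^sub>v v) $ i = 1 * v $ i + c" if "i < 2*n" for i using eq[OF that] by simp
  have z1: "(1::complex) \<noteq> 0" by simp
  note R = C_reduce[OF A v z1 eq']
  have Re: "(\<Sum>j<n. Mf A i j * Re (v $ j)) = Re (v $ i) + Re c" if "i < n" for i
  proof -
    have "(\<Sum>j<n. of_real (Mf A i j) * v $ j) = 1 * v $ i + c" using R(2)[of i] that by simp
    from arg_cong[OF this, of Re] show ?thesis by (simp add: Re_sum)
  qed
  have Im: "(\<Sum>j<n. Mf A i j * Im (v $ j)) = Im (v $ i) + Im c" if "i < n" for i
  proof -
    have "(\<Sum>j<n. of_real (Mf A i j) * v $ j) = 1 * v $ i + c" using R(2)[of i] that by simp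
    from arg_cong[OF this, of Im] show ?thesis by (simp add: Im_sum)
  qed
  have rc: "Re c = 0" by (rule stoch_c_zero[OF st npos Re])
  have ic: "Im c = 0" by (rule stoch_c_zero[OF st npos Im])
  show c0: "c = 0" using rc ic by (simp add: complex_eq_iff)
  have f: "Mf A i (Suc i) > 0" if "Suc i < n" for i using Mf_pos[OF A diag _ fwd[OF that]] that by simp
  have b: "Mf A (n - 1) 0 > 0" using Mf_pos[OF A diag _ bk] npos by simp
  have ReE: "\<And>i. i < n \<Longrightarrow> (\<Sum>j<n. Mf A i j * Re (v $ j)) = Re (v $ i)" using Re rc by simp
  have ImE: "\<And>i. i < n \<Longrightarrow> (\<Sum>j<n. Mf A i j * Im (v $ j)) = Im (v $ i)" using Im ic by simp
  have Re0: "Re (v $ i) = Re (v $ 0)" if "i < n" for i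
    by (rule stoch_const[OF st npos, where u="\<lambda>j. Re (v $ j)"]) (use f b ReE that in auto)
  have Im0: "Im (v $ i) = Im (v $ 0)" if "i < n" for i
    by (rule stoch_const[OF st npos, where u="\<lambda>j. Im (v $ j)"]) (use f b ImE that in auto)
  have low: "v $ i = v $ 0" if "i < n" for i using Re0[OF that] Im0[OF that] by (simp add: complex_eq_iff)
  show "v $ i = v $ 0" if "i < 2*n" for i
  proof (cases "i < n")
    case True thus ?thesis using low[OF True] by simp
  next
    case False
    hence "v $ i = v $ (i - n)" using R(1)[of "i - n"] that by simp
    moreover have "i - n < n" using that False by simp
    ultimately show ?thesis using low[of "i - n"] by simp
  qed
qed

lemma X_mult: assumes "v \<in> carrier_vec (2*n)" shows "X *\<^sub>v v = C *\<^sub>v v + (-1) \<cdot>\<^sub>v v"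
  by (rule charmat_mult[OF C_carrier assms])

lemma ker_iff: "v \<in> mat_kernel X \<longleftrightarrow> v \<in> carrier_vec (2*n) \<and> (\<forall>i<2*n. (C *\<^sub>v v) $ i = v $ i)"
proof -
  have "v \<in> mat_kernel X \<longleftrightarrow> v \<in> carrier_vec (2*n) \<and> X *\<^sub>v v = 0\<^sub>v (2*n)"
    using mat_kernel[OF X_carrier] by auto
  moreover have "X *\<^sub>v v = 0\<^sub>v (2*n) \<longleftrightarrow> (\<forall>i<2*n. (C *\<^sub>v v) $ i = v $ i)" if "v \<in> carrier_vec (2*n)"
    using that C_carrier by (auto simp: X_mult[OF that] vec_eq_iff)
  ultimately show ?thesis by blast
qed

lemma ker_const: assumes "v \<in> mat_kernel X" shows "v = v $ 0 \<cdot>\<^sub>v onev"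
proof -
  have v: "v \<in> carrier_vec (2*n)" and e: "\<And>i. i < 2*n \<Longrightarrow> (C *\<^sub>v v) $ i = v $ i + 0"
    using assms ker_iff by auto
  show ?thesis
  proof (rule eq_vecI)
    fix i assume "i < dim_vec (v $ 0 \<cdot>\<^sub>v onev)"
    hence i: "i < 2*n" by simp
    have "v $ i = v $ 0" by (rule gen_ker(2)[OF v e i])
    thus "v $ i = (v $ 0 \<cdot>\<^sub>v onev) $ i" using i by simp
  qed (use v in simp)
qed

lemma one_ker: "onev \<in> mat_kernel X" using ker_iff C_one by simp

lemma X2: "X ^\<^sub>m 2 = X * X" using X_carrier by (simp add: numeral_2_eq_2)
lemma X1: "X ^\<^sub>m 1 = X" using X_carrier by simp

lemma ker2: "mat_kernel (X ^\<^sub>m 2) = mat_kernel X"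
proof
  have XX: "X * X \<in> carrier_mat (2*n) (2*n)" using X_carrier by simp
  show "mat_kernel X \<subseteq> mat_kernel (X ^\<^sub>m 2)"
  proof
    fix v assume v: "v \<in> mat_kernel X"
    from mat_kernelD[OF X_carrier v] have "v \<in> carrier_vec (2*n)" "X *\<^sub>v v = 0\<^sub>v (2*n)" by auto
    hence "(X * X) *\<^sub>v v = 0\<^sub>v (2*n)" using X_carrier mat_vec_zero[OF X_carrier] by simp
    thus "v \<in> mat_kernel (X ^\<^sub>m 2)" unfolding X2 using XX \<open>v \<in> carrier_vec (2*n)\<close> by (intro mat_kernelI) auto
  qed
  show "mat_kernel (X ^\<^sub>m 2) \<subseteq> mat_kernel X"
  proof
    fix v assume "v \<in> mat_kernel (X ^\<^sub>m 2)"
    from mat_kernelD[OF XX this[unfolded X2]] have v: "v \<in> carrier_vec (2*n)" and "(X * X) *\<^sub>v v = 0\<^sub>v (2*n)" by auto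
    hence "X *\<^sub>v (X *\<^sub>v v) = 0\<^sub>v (2*n)" using X_carrier by simp
    hence "X *\<^sub>v v \<in> mat_kernel X" using X_carrier v by (intro mat_kernelI) auto
    from ker_const[OF this] obtain a where a: "X *\<^sub>v v = a \<cdot>\<^sub>v onev" by blast
    have e: "(C *\<^sub>v v) $ i = v $ i + a" if "i < 2*n" for i
    proof -
      have "(X *\<^sub>v v) $ i = a" using a that by simp
      hence "(C *\<^sub>v v) $ i - v $ i = a" using that v C_carrier by (simp add: X_mult[OF v])
      thus ?thesis by (metis diff_add_cancel add.commute)
    qed
    have "a = 0" by (rule gen_ker(1)[OF v e])
    hence "X *\<^sub>v v = 0\<^sub>v (2*n)" unfolding a by (intro eq_vecI) auto
    thus "v \<in> mat_kernel X" using X_carrier v by (intro mat_kernelI) auto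
  qed
qed


lemma dimker_le1: "kernel_dim X \<le> 1"
proof -
  interpret K: kernel "2*n" "2*n" X by unfold_locales (rule X_carrier)
  have sub1: "{onev} \<subseteq> mat_kernel X" using one_ker by simp
  have "K.span {onev} = mat_kernel X"
  proof
    show "K.span {onev} \<subseteq> mat_kernel X" using K.Ker.span_is_subset2[OF sub1] by simp
    show "mat_kernel X \<subseteq> K.span {onev}"
    proof
      fix v assume v: "v \<in> mat_kernel X"
      note sub = K.Ker.span_is_submodule[OF sub1]
      have o: "onev \<in> K.span {onev}" using K.Ker.in_own_span[OF sub1] by auto
      have "v $ 0 \<cdot>\<^sub>v onev \<in> K.span {onev}"
        using submodule.smult_closed[OF sub, of "v $ 0" onev] o by simp
      thus "v \<in> K.span {onev}" using ker_const[OF v] by simp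
    qed
  qed
  hence "K.dim \<le> card {onev}" by (intro K.Ker.gen_ge_dim) (use sub1 in auto)
  thus ?thesis by simp
qed


lemma eig_one: "eigenvalue C 1"
  unfolding eigenvalue_def eigenvector_def
proof (intro exI conjI)
  show "onev \<in> carrier_vec (dim_row C)" using C_carrier by simp
  show "onev \<noteq> 0\<^sub>v (dim_row C)"
  proof
    assume "onev = 0\<^sub>v (dim_row C)"
    hence "onev $ 0 = 0\<^sub>v (dim_row C) $ 0" by simp
    thus False using npos C_carrier by simp
  qed
  show "C *\<^sub>v onev = 1 \<cdot>\<^sub>v onev" using C_one by simp
qed

lemma dgen_eq: "dim_gen_eigenspace C 1 2 = dim_gen_eigenspace C 1 1"
proof -
  have d: "dim_col (X ^\<^sub>m 2) = dim_col X" using X_carrier by simp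
  show ?thesis unfolding dim_gen_eigenspace_def kernel_dim_def X1 d ker2 ..
qed

lemma sum_list_eq_pointwise:
  fixes f g :: "nat \<Rightarrow> nat"
  assumes "\<And>x. f x \<le> g x" "sum_list (map f L) = sum_list (map g L)"
  shows "\<forall>x\<in>set L. f x = g x"
  using assms(2)
proof (induction L)
  case (Cons a L)
  have "sum_list (map f L) \<le> sum_list (map g L)"
    by (induction L) (auto intro: add_mono assms(1))
  with Cons.prems assms(1)[of a] have "f a = g a" "sum_list (map f L) = sum_list (map g L)" by auto
  with Cons.IH show ?case by auto
qed simp

lemma order_one: "order 1 (char_poly C) = 1"
proof -
  obtain as where "char_poly C = (\<Prod>a\<leftarrow>as. [:- a, 1:])" using char_poly_factorized[OF C_carrier] by auto
  from jordan_nf_exists[OF C_carrier this] obtain n_as where jnf: "jordan_nf C n_as" by auto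
  define L where "L = map fst (filter (\<lambda>(n, e). e = (1::complex)) n_as)"
  have flt: "(\<lambda>na. snd na = (1::complex)) = (\<lambda>(n, e). e = 1)" by auto
  have ord: "order 1 (char_poly C) = sum_list L"
    unfolding jordan_nf_order[OF jnf] L_def flt ..
  have dk: "dim_gen_eigenspace C 1 k = sum_list (map (min k) L)" for k
    unfolding dim_gen_eigenspace[OF jnf] L_def ..
  have e2: "sum_list (map (min 1) L) = sum_list (map (min 2) L)" using dgen_eq dk[of 1] dk[of 2] by simp
  have mono: "\<And>x::nat. min 1 x \<le> min 2 x" by simp
  have pw: "\<forall>x\<in>set L. min 1 x = min 2 x" by (rule sum_list_eq_pointwise[OF mono e2])
  have le1: "\<forall>x\<in>set L. x \<le> 1"
  proof
    fix x assume "x \<in> set L"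
    with pw have "min 1 x = min (2::nat) x" by blast
    thus "x \<le> 1" by (simp add: min_def split: if_splits)
  qed
  hence "map (min 1) L = L" by (induction L) auto
  hence "sum_list L = dim_gen_eigenspace C 1 1" using dk[of 1] by simp
  also have "\<dots> = kernel_dim X" unfolding dim_gen_eigenspace_def X1 ..
  also have "\<dots> \<le> 1" by (rule dimker_le1)
  finally have "order 1 (char_poly C) \<le> 1" using ord by simp
  moreover have "order 1 (char_poly C) \<noteq> 0"
  proof -
    have "poly (char_poly C) 1 = 0" using eig_one eigenvalue_root_char_poly[OF C_carrier] by simp
    moreover have "char_poly C \<noteq> 0" using degree_monic_char_poly[OF C_carrier] by auto
    ultimately show ?thesis using order_root by blast
  qed
  ultimately show ?thesis by simp
qed

end

theorem proposition1:
  fixes n s :: nat and A :: "real mat"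
  assumes "n \<ge> 2" and "1 \<le> s" and "s \<le> n - 1"
    and "A \<in> carrier_mat n n"
    and "\<And>i j. i < n \<Longrightarrow> j < n \<Longrightarrow>
           ((i + 1 \<le> j + 1 \<and> j + 1 \<le> min (i + 1 + n - s) n) \<or> j + 1 + s \<le> i + 1) \<Longrightarrow>
           A $$ (i, j) \<noteq> 0"
  shows "eigenvalue (map_mat complex_of_real (A_sde A)) 1
    \<and> order 1 (char_poly (map_mat complex_of_real (A_sde A))) = 1
    \<and> (\<forall>z. eigenvalue (map_mat complex_of_real (A_sde A)) z \<longrightarrow> z \<noteq> 1 \<longrightarrow> cmod z < 1)"
proof -
  interpret S: sde_setup A n
  proof
    show "A \<in> carrier_mat n n" by (rule assms(4))
    show "n > 0" using assms(1) by simp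
    show "A $$ (i, i) \<noteq> 0" if "i < n" for i
      using assms(5)[of i i] that assms(1-3) by auto
    show "A $$ (i, Suc i) \<noteq> 0" if "Suc i < n" for i
      using assms(5)[of i "Suc i"] that assms(1-3) by auto
    show "A $$ (n - 1, 0) \<noteq> 0"
      using assms(5)[of "n - 1" 0] assms(1-3) by auto
  qed
  show ?thesis using S.eig_one S.order_one S.eig_bound by blast
qed

end
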